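(* Let $\mathbf a=\{a_k\}_{k\ge0}$ with $\operatorname{Im}a_k>0$ have no limit points on the real axis $\mathbb R$, satisfy $\lim_{n\to\infty}\sigma_n=+\infty$, and satisfy $\varsigma_n/\sigma_n\le C$ for all $n\ge1$ with a constant $C$. Then for every $\delta>0$ and every $x\in\mathbb R$, $$\lim_{n\to\infty}\int_0^\delta\frac{\sin\big(y\,\mu_n(y;x)\big)}{y}\,dy=\frac\pi2\quad\text{and}\quad\lim_{n\to\infty}\int_0^\delta\frac{\sin\big(y\,\mu_n(-y;x)\big)}{y}\,dy=\frac\pi2.$$
   Context: For $y\ne0$, $x\in\mathbb R$: $\mu_n(y;x):=\frac1y\int_x^{x+y}\sum_{k=0}^{n-1}\frac{2\operatorname{Im}a_k}{(u-\operatorname{Re}a_k)^2+(\operatorname{Im}a_k)^2}\,du$. $\sigma_n:=\sum_{k=0}^{n-1}\frac{|\operatorname{Im}a_k|}{1+|a_k|^2}$, $\varsigma_n:=\sum_{k=0}^{n-1}\frac{1}{(\operatorname{Im}a_k)^2}$. "No limit points on $\mathbb R$" means no subsequence of $\{a_k\}$ converges to a real number. *)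

theory Defs
  imports "HOL-Analysis.Analysis"
begin

definition poisson_sum :: "(nat \<Rightarrow> complex) \<Rightarrow> nat \<Rightarrow> real \<Rightarrow> real" where
  "poisson_sum a n u = (\<Sum>k<n. 2 * Im (a k) / ((u - Re (a k))^2 + (Im (a k))^2))"

definition mu :: "(nat \<Rightarrow> complex) \<Rightarrow> nat \<Rightarrow> real \<Rightarrow> real \<Rightarrow> real" where
  "mu a n y x = (1 / y) *
     (if 0 \<le> y then integral {x..x+y} (poisson_sum a n)
      else - integral {x+y..x} (poisson_sum a n))"

definition sigma :: "(nat \<Rightarrow> complex) \<Rightarrow> nat \<Rightarrow> real" where
  "sigma a n = (\<Sum>k<n. \<bar>Im (a k)\<bar> / (1 + (cmod (a k))^2))"

definition varsigma :: "(nat \<Rightarrow> complex) \<Rightarrow> nat \<Rightarrow> real" where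
  "varsigma a n = (\<Sum>k<n. 1 / (Im (a k))^2)"

definition no_real_limit_points :: "(nat \<Rightarrow> complex) \<Rightarrow> bool" where
  "no_real_limit_points a \<longleftrightarrow>
     \<not> (\<exists>r::real. \<exists>s::nat \<Rightarrow> nat. strict_mono s \<and> (a \<circ> s) \<longlonglongrightarrow> complex_of_real r)"

end

theory Submission
  imports Defs "HOL-Probability.Sinc_Integral"
begin

lemma sin_diff_le: "\<bar>sin a - sin b\<bar> \<le> \<bar>a - b\<bar>" for a b :: real
proof -
  have "sin a - sin b = 2 * sin ((a - b) / 2) * cos ((a + b) / 2)"
    by (simp add: sin_diff_sin)
  also have "\<bar>\<dots>\<bar> \<le> 2 * \<bar>(a - b) / 2\<bar> * 1"
    unfolding abs_mult
    by (intro mult_mono abs_sin_x_le_abs_x) auto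
  finally show ?thesis by simp
qed

lemma Si_0: "Si 0 = 0"
  using Si_neg[of 0] by simp

lemma Si_scaled_integral:
  fixes c y0 :: real
  assumes "c > 0" "y0 \<ge> 0"
  shows "((\<lambda>y. sin (c * y) / y) has_integral Si (c * y0)) {0..y0}"
proof -
  have "((\<lambda>y. sin (c * y) / y) has_integral Si (c * y0) - Si (c * 0)) {0..y0}"
  proof (rule fundamental_theorem_of_calculus_interior)
    show "continuous_on {0..y0} (\<lambda>y. Si (c * y))"
      by (intro continuous_at_imp_continuous_on ballI continuous_intros isCont_o2[OF _ isCont_Si])
    fix y assume y: "y \<in> {0<..<y0}"
    have "((\<lambda>y. Si (c * y)) has_real_derivative sinc (c * y) * c) (at y)"
      by (rule DERIV_chain2[OF DERIV_Si]) (auto intro!: derivative_eq_intros)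
    moreover have "sinc (c * y) * c = sin (c * y) / y" using y assms by auto
    ultimately show "((\<lambda>y. Si (c * y)) has_vector_derivative sin (c * y) / y) (at y)"
      by (simp add: has_real_derivative_iff_has_vector_derivative)
  qed (use assms in auto)
  then show ?thesis by (simp add: Si_0)
qed

lemma single_bound:
  fixes F g g' :: "real \<Rightarrow> real" and \<delta> K R t :: real
  assumes \<delta>: "\<delta> > 0" and K: "K \<ge> 0" and R: "R \<ge> 1" and t1: "t \<ge> 1"
    and g0t: "g 0 = t^3" and y0\<delta>: "1/t^2 \<le> \<delta>"
    and F0: "F 0 = 0"
    and dF: "\<And>y. (F has_real_derivative g y) (at y)"
    and dg: "\<And>y. (g has_real_derivative g' y) (at y)"
    and g'b: "\<And>y. y \<in> {0..\<delta>} \<Longrightarrow> \<bar>g' y\<bar> \<le> K * g y"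
    and gR1: "\<And>y. y \<in> {0..\<delta>} \<Longrightarrow> g y \<le> R * g 0"
    and gR2: "\<And>y. y \<in> {0..\<delta>} \<Longrightarrow> g 0 \<le> R * g y"
  shows "\<bar>integral {0..\<delta>} (\<lambda>y. sin (F y) / y) - Si t\<bar> \<le> (K*R + R/\<delta> + R + R*(1+K*\<delta>)) / t"
proof -
  define g0 where "g0 = g 0"
  define y0 where "y0 = 1/t^2"
  define h where "h = (\<lambda>y. sin (F y) / y)"
  have t0: "t > 0" using t1 by simp
  have g0ge: "g0 \<ge> t"
  proof -
    have "t * 1 \<le> t * t^2" using t1 by (intro mult_left_mono one_le_power) auto
    then show ?thesis unfolding g0_def g0t by (simp add: power2_eq_square power3_eq_cube)
  qed
  have g0pos: "g0 > 0" using g0ge t0 by simp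
  have gpos: "g y > 0" if "y \<in> {0..\<delta>}" for y
  proof -
    have "0 < R * g y" using gR2[OF that] g0pos unfolding g0_def by linarith
    then show ?thesis using R by (simp add: zero_less_mult_iff)
  qed
  have y0pos: "y0 > 0" unfolding y0_def using t0 by simp
  have y0le: "y0 \<le> \<delta>" unfolding y0_def using y0\<delta> .
  have g0y0: "g0 * y0 = t" unfolding g0_def g0t y0_def using t0 by (simp add: power2_eq_square power3_eq_cube)
  have contF: "isCont F y" for y using dF by (rule DERIV_isCont)
  have contg: "isCont g y" for y using dg by (rule DERIV_isCont)
  have gdiff: "\<bar>g z - g0\<bar> \<le> K*R*g0*z" if z: "z \<in> {0..\<delta>}" for z
  proof (cases "z = 0")
    case True then show ?thesis unfolding g0_def by simp
  next
    case False
    then have z0: "0 < z" using z by simp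
    obtain w where w: "0 < w" "w < z" "g z - g 0 = (z - 0) * g' w"
      using MVT2[OF z0, of g g'] dg by blast
    have wd: "w \<in> {0..\<delta>}" using w z by auto
    have "\<bar>g' w\<bar> \<le> K * (R * g0)"
      using g'b[OF wd] gR1[OF wd] K unfolding g0_def
      by (meson mult_left_mono order_trans)
    then have "\<bar>g z - g0\<bar> \<le> z * (K * (R * g0))"
      using w z0 unfolding g0_def by (simp add: abs_mult mult_left_mono)
    then show ?thesis by (simp add: algebra_simps)
  qed
  have Fbound: "\<bar>F y - g0 * y\<bar> \<le> K*R*g0*y^2" if y: "y \<in> {0..y0}" for y
  proof (cases "y = 0")
    case True then show ?thesis using F0 by simp
  next
    case False
    then have y0': "0 < y" using y by simp
    have "((\<lambda>s. F s - g0 * s) has_real_derivative g s - g0) (at s)" for s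
      by (auto intro!: derivative_eq_intros dF)
    then obtain z where z: "0 < z" "z < y" "(F y - g0 * y) - (F 0 - g0 * 0) = (y - 0) * (g z - g0)"
      using MVT2[OF y0', of "\<lambda>s. F s - g0 * s" "\<lambda>s. g s - g0"] by blast
    have zd: "z \<in> {0..\<delta>}" using z y y0le by auto
    have "\<bar>g z - g0\<bar> \<le> K*R*g0*y"
      using gdiff[OF zd] z K R g0pos
      by (smt (verit) mult_left_mono mult_nonneg_nonneg)
    then have "\<bar>F y - g0 * y\<bar> \<le> y * (K*R*g0*y)"
      using z F0 y0' by (simp add: abs_mult mult_left_mono)
    then show ?thesis by (simp add: power2_eq_square algebra_simps)
  qed
  define ht where "ht = (\<lambda>y. if y = 0 then g0 else h y)"
  have isCont_ht: "isCont ht y" for y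
  proof (cases "y = 0")
    case True
    have "((\<lambda>y. sin (F y)) has_real_derivative cos (F 0) * g 0) (at 0)"
      by (auto intro!: derivative_eq_intros dF)
    then have "(\<lambda>u. (sin (F (0 + u)) - sin (F 0)) / u) \<midarrow>0\<rightarrow> g0"
      unfolding DERIV_def using F0 g0_def by simp
    then have "h \<midarrow>0\<rightarrow> g0" unfolding h_def using F0 by simp
    then have "ht \<midarrow>0\<rightarrow> g0"
      by (rule LIM_equal[THEN iffD1, rotated]) (simp add: ht_def)
    then show ?thesis using True by (simp add: isCont_def ht_def)
  next
    case False
    have "isCont h y" unfolding h_def using False
      by (intro continuous_intros contF) auto
    moreover have "\<forall>\<^sub>F u in nhds y. h u = ht u"
      using t1_space_nhds[OF False] by (rule eventually_mono) (simp add: ht_def)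
    ultimately show ?thesis using isCont_cong by blast
  qed
  have "ht integrable_on {0..y0}"
    by (intro integrable_continuous_interval continuous_at_imp_continuous_on ballI isCont_ht)
  then obtain I1 where "(ht has_integral I1) {0..y0}" by blast
  then have hI1: "(h has_integral I1) {0..y0}"
    by (intro has_integral_spike_finite[of "{0}" _ h ht]) (auto simp: ht_def)
  have q: "((\<lambda>y. sin (g0 * y) / y) has_integral Si t) {0..y0}"
    using Si_scaled_integral[OF g0pos, of y0] y0pos g0y0 by simp
  have diffI: "((\<lambda>y. h y - sin (g0 * y) / y) has_integral I1 - Si t) {0..y0}"
    by (rule has_integral_diff[OF hI1 q])
  have "norm (I1 - Si t) \<le> (K*R*g0*y0) * Henstock_Kurzweil_Integration.content (cbox 0 y0)"
  proof (rule has_integral_bound[OF _ diffI[unfolded cbox_interval[symmetric]]])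
    show "0 \<le> K*R*g0*y0" using K R g0pos y0pos by simp
    fix y assume y: "y \<in> cbox 0 y0"
    show "norm (h y - sin (g0 * y) / y) \<le> K*R*g0*y0"
    proof (cases "y = 0")
      case True then show ?thesis using K R g0pos y0pos by (simp add: h_def)
    next
      case False
      then have ypos: "y > 0" using y by simp
      have "norm (h y - sin (g0 * y) / y) = \<bar>sin (F y) - sin (g0 * y)\<bar> / y"
        unfolding h_def using ypos by (simp add: diff_divide_distrib[symmetric])
      also have "\<dots> \<le> (K*R*g0*y^2) / y"
        using Fbound[of y] y sin_diff_le[of "F y" "g0 * y"] ypos
        by (intro divide_right_mono) auto
      also have "\<dots> = K*R*g0*y" using ypos by (simp add: power2_eq_square)
      also have "\<dots> \<le> K*R*g0*y0" using y K R g0pos by (intro mult_left_mono) auto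
      finally show ?thesis .
    qed
  qed
  also have "\<dots> = K*R*(g0*y0)*y0" using y0pos by simp
  also have "\<dots> = K*R/t" using g0y0 t0 unfolding y0_def by (simp add: power2_eq_square)
  finally have P1: "\<bar>I1 - Si t\<bar> \<le> K*R/t" by simp
  define \<Phi> where "\<Phi> = (\<lambda>y. - cos (F y) / (y * g y))"
  define r where "r = (\<lambda>y. cos (F y) * (g y + y * g' y) / (y * g y)^2)"
  have yI: "y > 0" "y \<in> {0..\<delta>}" if "y \<in> {y0..\<delta>}" for y
    using that y0pos by auto
  have d\<Phi>: "(\<Phi> has_vector_derivative (h y + r y)) (at y within {y0..\<delta>})"
    if y: "y \<in> {y0..\<delta>}" for y
  proof -
    have gy: "g y > 0" using gpos yI[OF y] by simp
    have yp: "y > 0" using yI[OF y] by simp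
    have "(\<Phi> has_real_derivative
        ((sin (F y) * g y) * (y * g y) - (- cos (F y)) * (1 * g y + y * g' y)) / (y * g y)^2) (at y)"
      unfolding \<Phi>_def using gy yp
      by (auto intro!: derivative_eq_intros dF dg simp: power2_eq_square) (simp only: minus_divide_left, simp add: algebra_simps)
    moreover have "((sin (F y) * g y) * (y * g y) - (- cos (F y)) * (1 * g y + y * g' y)) / (y * g y)^2
       = h y + r y"
      unfolding h_def r_def using gy yp by (simp add: field_simps power2_eq_square)
    ultimately show ?thesis
      by (simp add: has_real_derivative_iff_has_vector_derivative has_vector_derivative_at_within)
  qed
  have FTC: "((\<lambda>y. h y + r y) has_integral \<Phi> \<delta> - \<Phi> y0) {y0..\<delta>}"
    by (rule fundamental_theorem_of_calculus[OF y0le d\<Phi>])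
  have "h integrable_on {y0..\<delta>}"
    unfolding h_def using y0pos
    by (intro integrable_continuous_interval continuous_at_imp_continuous_on ballI continuous_intros contF) auto
  then obtain I2 where hI2: "(h has_integral I2) {y0..\<delta>}" by blast
  have rI: "(r has_integral (\<Phi> \<delta> - \<Phi> y0 - I2)) {y0..\<delta>}"
    using has_integral_diff[OF FTC hI2] by simp
  define c where "c = R*(1+K*\<delta>)/g0"
  have c0: "c \<ge> 0" unfolding c_def using R K \<delta> g0pos by simp
  have rb: "norm (r y) \<le> c / y^2" if y: "y \<in> {y0..\<delta>}" for y
  proof -
    have gy: "g y > 0" using gpos yI[OF y] by simp
    have yp: "y > 0" using yI[OF y] by simp
    have "\<bar>g y + y * g' y\<bar> \<le> \<bar>g y\<bar> + \<bar>y * g' y\<bar>" by (rule abs_triangle_ineq)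
    also have "\<dots> = g y + y * \<bar>g' y\<bar>" using gy yp by (simp add: abs_mult)
    also have "\<dots> \<le> g y + y * (K * g y)" using g'b[OF yI(2)[OF y]] yp by (simp add: mult_left_mono)
    also have "\<dots> = (1 + K*y) * g y" by (simp add: algebra_simps)
    also have "\<dots> \<le> (1 + K*\<delta>) * g y" using y K gy by (intro mult_right_mono) (auto intro: mult_left_mono)
    finally have num: "\<bar>g y + y * g' y\<bar> \<le> (1 + K*\<delta>) * g y" .
    have "norm (r y) = \<bar>cos (F y)\<bar> * \<bar>g y + y * g' y\<bar> / (y * g y)^2"
      unfolding r_def by (simp add: abs_mult)
    also have "\<dots> \<le> 1 * ((1 + K*\<delta>) * g y) / (y * g y)^2"
      using num by (intro divide_right_mono mult_mono) auto
    also have "\<dots> = (1 + K*\<delta>) / (y^2 * g y)" using gy yp by (simp add: power2_eq_square field_simps)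
    also have "\<dots> \<le> (1 + K*\<delta>) / (y^2 * (g0 / R))"
    proof -
      have "g0 / R \<le> g y" using gR2[OF yI(2)[OF y]] R unfolding g0_def by (simp add: divide_le_eq mult.commute)
      moreover have "0 < g0 / R" using g0pos R by simp
      ultimately show ?thesis using K \<delta> yp
        by (intro divide_left_mono mult_left_mono mult_pos_pos) auto
    qed
    also have "\<dots> = c / y^2" unfolding c_def using R by (simp add: field_simps)
    finally show ?thesis .
  qed
  have cI: "((\<lambda>y. c / y^2) has_integral ((- c / \<delta>) - (- c / y0))) {y0..\<delta>}"
  proof (rule fundamental_theorem_of_calculus[OF y0le])
    fix y assume y: "y \<in> {y0..\<delta>}"
    then have yp: "y > 0" using y0pos by simp
    have "((\<lambda>y. - c / y) has_real_derivative c / y^2) (at y)"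
      using yp by (auto intro!: derivative_eq_intros simp: power2_eq_square)
    then show "((\<lambda>y. - c / y) has_vector_derivative c / y^2) (at y within {y0..\<delta>})"
      by (simp add: has_real_derivative_iff_has_vector_derivative has_vector_derivative_at_within)
  qed
  have "norm (\<Phi> \<delta> - \<Phi> y0 - I2) \<le> (- c / \<delta>) - (- c / y0)"
    using integral_norm_bound_integral[OF has_integral_integrable[OF rI] has_integral_integrable[OF cI] rb]
      integral_unique[OF rI] integral_unique[OF cI] by simp
  also have "\<dots> \<le> c / y0" using c0 \<delta> by simp
  finally have rest: "\<bar>\<Phi> \<delta> - \<Phi> y0 - I2\<bar> \<le> c / y0" by simp
  have \<Phi>b: "\<bar>\<Phi> y\<bar> \<le> R / (y * g0)" if y: "y \<in> {y0..\<delta>}" for y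
  proof -
    have gy: "g y > 0" using gpos yI[OF y] by simp
    have yp: "y > 0" using yI[OF y] by simp
    have "\<bar>\<Phi> y\<bar> = \<bar>cos (F y)\<bar> / (y * g y)" unfolding \<Phi>_def using gy yp by (simp add: abs_mult)
    also have "\<dots> \<le> 1 / (y * g y)" using gy yp by (intro divide_right_mono) auto
    also have "\<dots> = R / (R * (y * g y))" using R by simp
    also have "\<dots> \<le> R / (y * g0)"
    proof (rule divide_left_mono)
      show "y * g0 \<le> R * (y * g y)"
        using mult_left_mono[OF gR2[OF yI(2)[OF y]], of y] yp unfolding g0_def by (simp add: algebra_simps)
    qed (use R yp g0pos gy in auto)
    finally show ?thesis .
  qed
  have "\<bar>I2\<bar> \<le> \<bar>\<Phi> \<delta>\<bar> + \<bar>\<Phi> y0\<bar> + \<bar>\<Phi> \<delta> - \<Phi> y0 - I2\<bar>" by linarith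
  also have "\<dots> \<le> R / (\<delta> * g0) + R / (y0 * g0) + c / y0"
    using \<Phi>b[of \<delta>] \<Phi>b[of y0] rest y0le by auto
  also have "R / (\<delta> * g0) \<le> R / (\<delta> * t)"
    using g0ge t0 \<delta> R by (intro divide_left_mono mult_left_mono mult_pos_pos) auto
  also have "R / (y0 * g0) = R / t" using g0y0 by (simp add: mult.commute)
  also have "c / y0 = R*(1+K*\<delta>) / t" unfolding c_def using g0y0 by (simp add: mult.commute)
  finally have P2: "\<bar>I2\<bar> \<le> R / (\<delta> * t) + R / t + R*(1+K*\<delta>) / t" by simp
  have "(h has_integral I1 + I2) {0..\<delta>}"
    by (rule has_integral_combine[OF _ y0le hI1 hI2]) (use y0pos in simp)
  then have "integral {0..\<delta>} h = I1 + I2" by (rule integral_unique)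
  then have "\<bar>integral {0..\<delta>} h - Si t\<bar> \<le> K*R/t + (R / (\<delta> * t) + R / t + R*(1+K*\<delta>) / t)"
    using P1 P2 by linarith
  also have "\<dots> = (K*R + R/\<delta> + R + R*(1+K*\<delta>)) / t" using \<delta> t0 by (simp add: field_simps)
  finally show ?thesis unfolding h_def .
qed
lemma limit_part:
  fixes F g g' :: "nat \<Rightarrow> real \<Rightarrow> real" and \<delta> K R :: real
  assumes \<delta>: "\<delta> > 0" and K: "K \<ge> 0" and R: "R \<ge> 1"
    and F0: "\<And>n. F n 0 = 0"
    and dF: "\<And>n y. (F n has_real_derivative g n y) (at y)"
    and dg: "\<And>n y. (g n has_real_derivative g' n y) (at y)"
    and g'b: "\<And>n y. y \<in> {0..\<delta>} \<Longrightarrow> \<bar>g' n y\<bar> \<le> K * g n y"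
    and gR1: "\<And>n y. y \<in> {0..\<delta>} \<Longrightarrow> g n y \<le> R * g n 0"
    and gR2: "\<And>n y. y \<in> {0..\<delta>} \<Longrightarrow> g n 0 \<le> R * g n y"
    and lim: "filterlim (\<lambda>n. g n 0) at_top sequentially"
  shows "(\<lambda>n. integral {0..\<delta>} (\<lambda>y. sin (F n y) / y)) \<longlonglongrightarrow> pi/2"
proof -
  define t where "t n = root 3 (g n 0)" for n
  have tlim: "filterlim t at_top sequentially"
    unfolding filterlim_at_top
  proof
    fix Z :: real
    have "eventually (\<lambda>n. g n 0 \<ge> (max Z 0)^3) sequentially"
      using lim unfolding filterlim_at_top by blast
    then show "eventually (\<lambda>n. Z \<le> t n) sequentially"
    proof (rule eventually_mono)
      fix n assume "g n 0 \<ge> (max Z 0)^3"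
      then have "root 3 ((max Z 0)^3) \<le> t n" unfolding t_def by simp
      then show "Z \<le> t n" by (simp add: real_root_power_cancel)
    qed
  qed
  define M where "M = K*R + R/\<delta> + R + R*(1+K*\<delta>)"
  define I where "I n = integral {0..\<delta>} (\<lambda>y. sin (F n y) / y)" for n
  have ev1: "eventually (\<lambda>n. t n \<ge> max 1 (1/\<delta>)) sequentially"
    using tlim unfolding filterlim_at_top by blast
  have ev2: "eventually (\<lambda>n. g n 0 \<ge> 0) sequentially"
    using lim unfolding filterlim_at_top by blast
  have ev: "eventually (\<lambda>n. norm (I n - Si (t n)) \<le> M / t n) sequentially"
    using ev1 ev2
  proof eventually_elim
    case (elim n)
    have t1: "t n \<ge> 1" and t\<delta>: "t n \<ge> 1/\<delta>" using elim by auto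
    have "t n * 1 \<le> t n * t n" using t1 by (intro mult_left_mono) auto
    then have "1/\<delta> \<le> (t n)^2" using t\<delta> by (simp add: power2_eq_square)
    then have "\<delta> * (1/\<delta>) \<le> \<delta> * (t n)^2" using \<delta> by (intro mult_left_mono) auto
    then have "1 \<le> \<delta> * (t n)^2" using \<delta> by simp
    then have y0: "1/(t n)^2 \<le> \<delta>" using t1 by (simp add: divide_le_eq mult.commute)
    have g0: "g n 0 = (t n)^3" unfolding t_def using elim by simp
    show ?case
      using single_bound[OF \<delta> K R t1 g0 y0 F0 dF dg g'b gR1 gR2] unfolding I_def M_def by simp
  qed
  have "(\<lambda>n. M / t n) \<longlonglongrightarrow> 0"
    by (rule tendsto_divide_0[OF tendsto_const filterlim_at_top_imp_at_infinity[OF tlim]])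
  then have "(\<lambda>n. I n - Si (t n)) \<longlonglongrightarrow> 0"
    using ev by (rule Lim_null_comparison[rotated])
  moreover have "(\<lambda>n. Si (t n)) \<longlonglongrightarrow> pi/2"
    by (rule filterlim_compose[OF Si_at_top tlim])
  ultimately have "(\<lambda>n. (I n - Si (t n)) + Si (t n)) \<longlonglongrightarrow> 0 + pi/2"
    by (rule tendsto_add)
  then show ?thesis unfolding I_def by simp
qed


lemma eta_exists:
  fixes a :: "nat \<Rightarrow> complex" and S :: "real set"
  assumes Im: "\<And>k. Im (a k) > 0" and nl: "no_real_limit_points a" and S: "compact S"
  shows "\<exists>\<eta>>0. \<forall>k. \<forall>u\<in>S. \<eta> \<le> cmod (complex_of_real u - a k)"
proof (cases "S = {}")
  case True then show ?thesis by (intro exI[of _ 1]) auto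
next
  case False
  define S' where "S' = complex_of_real ` S"
  have cS': "compact S'" unfolding S'_def
    by (rule compact_continuous_image[OF _ S]) (intro continuous_intros)
  then have clS': "closed S'" by (rule compact_imp_closed)
  have neS': "S' \<noteq> {}" using False unfolding S'_def by simp
  define f where "f k = infdist (a k) S'" for k
  have notin: "a k \<notin> S'" for k using Im[of k] unfolding S'_def by auto
  have fpos: "f k > 0" for k unfolding f_def by (rule infdist_pos_not_in_closed[OF clS' neS' notin])
  have key: "\<exists>\<eta>>0. \<forall>k. \<eta> \<le> f k"
  proof (rule ccontr)
    assume "\<not> ?thesis"
    then have H: "\<exists>k. f k < \<eta>" if "\<eta> > 0" for \<eta> using that by (meson not_le)
    have claim: "\<exists>k. N < k \<and> f k < \<eta>" if eta0: "\<eta> > 0" for \<eta> N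
    proof -
      define m where "m = Min (f ` {..N})"
      have m0: "m > 0" unfolding m_def using fpos by (subst Min_gr_iff) auto
      obtain k where k: "f k < min \<eta> m" using H[of "min \<eta> m"] m0 eta0 by auto
      have "\<not> k \<le> N"
      proof
        assume "k \<le> N"
        then have "m \<le> f k" unfolding m_def by (intro Min_le) auto
        then show False using k by simp
      qed
      then show ?thesis using k by (intro exI[of _ k]) auto
    qed
    have "\<forall>j N. \<exists>k. N < k \<and> f k < inverse (real (Suc j))"
      using claim by simp
    then obtain nxt where nxt: "\<And>j N. N < nxt j N \<and> f (nxt j N) < inverse (real (Suc j))"
      by metis
    define s where "s = rec_nat (nxt 0 0) (\<lambda>j p. nxt (Suc j) p)"
    have s0: "s 0 = nxt 0 0" and sS: "s (Suc j) = nxt (Suc j) (s j)" for j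
      unfolding s_def by simp_all
    have sm: "strict_mono s" unfolding strict_mono_Suc_iff using nxt sS by simp
    have fs: "f (s j) < inverse (real (Suc j))" for j
    proof (cases j)
      case 0 then show ?thesis using nxt[where j=0 and N=0] s0 by simp
    next
      case (Suc i) then show ?thesis using nxt[where j="Suc i" and N="s i"] sS[of i] by simp
    qed
    have inT: "\<forall>j. a (s j) \<in> {x. infdist x S' \<le> 1}"
    proof
      fix j
      have "inverse (real (Suc j)) \<le> 1" by (simp add: inverse_le_1_iff)
      then show "a (s j) \<in> {x. infdist x S' \<le> 1}" using fs[of j] unfolding f_def by simp
    qed
    have "compact {x. infdist x S' \<le> 1}" by (rule compact_infdist_le[OF neS' cS']) simp
    then have "seq_compact {x. infdist x S' \<le> 1}" by (rule compact_imp_seq_compact)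
    moreover have inT': "\<forall>j. (a \<circ> s) j \<in> {x. infdist x S' \<le> 1}" using inT by simp
    ultimately obtain l r where r: "strict_mono r" and lr: "((a \<circ> s) \<circ> r) \<longlonglongrightarrow> l"
      by (rule seq_compactE)
    have lim1: "(\<lambda>j. f (s (r j))) \<longlonglongrightarrow> infdist l S'"
      unfolding f_def using tendsto_infdist[OF lr] by (simp add: o_def)
    have lim2: "(\<lambda>j. f (s (r j))) \<longlonglongrightarrow> 0"
    proof (rule tendsto_sandwich[OF _ _ tendsto_const LIMSEQ_inverse_real_of_nat])
      show "\<forall>\<^sub>F n in sequentially. 0 \<le> f (s (r n))" using fpos by (simp add: less_imp_le)
      show "\<forall>\<^sub>F n in sequentially. f (s (r n)) \<le> inverse (real (Suc n))"
      proof (intro always_eventually allI)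
        fix n
        have "inverse (real (Suc (r n))) \<le> inverse (real (Suc n))"
          using seq_suble[OF r, of n] by (intro le_imp_inverse_le) auto
        then show "f (s (r n)) \<le> inverse (real (Suc n))" using fs[of "r n"] by linarith
      qed
    qed
    have "infdist l S' = 0" using LIMSEQ_unique[OF lim1 lim2] .
    then have "l \<in> S'" using in_closed_iff_infdist_zero[OF clS' neS'] by simp
    then obtain r0 where "l = complex_of_real r0" unfolding S'_def by auto
    moreover have "strict_mono (s \<circ> r)" by (rule strict_mono_o[OF sm r])
    moreover have "(a \<circ> (s \<circ> r)) \<longlonglongrightarrow> l" using lr by (simp add: o_assoc)
    ultimately show False using nl unfolding no_real_limit_points_def by blast
  qed
  then obtain \<eta> where \<eta>: "\<eta> > 0" "\<And>k. \<eta> \<le> f k" by blast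
  show ?thesis
  proof (intro exI[of _ \<eta>] conjI allI ballI \<eta>(1))
    fix k u assume "u \<in> S"
    then have "f k \<le> dist (a k) (complex_of_real u)" unfolding f_def S'_def by (intro infdist_le) auto
    then show "\<eta> \<le> cmod (complex_of_real u - a k)" using \<eta>(2)[of k] by (simp add: dist_norm norm_minus_commute)
  qed
qed

lemma term_deriv_bound:
  fixes s c u \<eta> :: real
  assumes s: "s > 0" and \<eta>: "\<eta> > 0" and D: "\<eta>^2 \<le> (u - c)^2 + s^2"
  shows "\<bar>- (2 * s) * (2 * (u - c)) / ((u - c)^2 + s^2)^2\<bar> \<le> (2/\<eta>) * (2 * s / ((u - c)^2 + s^2))"
proof -
  define D where "D = (u - c)^2 + s^2"
  have Dp: "D > 0" unfolding D_def using s by (simp add: add_nonneg_pos)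
  have key: "\<bar>u - c\<bar> * \<eta> \<le> D"
  proof (cases "\<bar>u - c\<bar> \<le> \<eta>")
    case True
    then have "\<bar>u - c\<bar> * \<eta> \<le> \<eta> * \<eta>" using \<eta> by (simp add: mult_right_mono)
    then show ?thesis using D unfolding D_def by (simp add: power2_eq_square)
  next
    case False
    then have "\<bar>u - c\<bar> * \<eta> \<le> \<bar>u - c\<bar> * \<bar>u - c\<bar>" using \<eta> by (intro mult_left_mono) auto
    also have "\<dots> = (u - c)^2" by (simp add: power2_eq_square)
    also have "\<dots> \<le> D" unfolding D_def by simp
    finally show ?thesis .
  qed
  have "\<bar>- (2 * s) * (2 * (u - c)) / D^2\<bar> = (2 * s / D) * (2 * \<bar>u - c\<bar> / D)"
  proof -
    have a2: "\<bar>2 * u - 2 * c\<bar> = 2 * \<bar>u - c\<bar>" by (auto simp: abs_if)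
    show ?thesis using s Dp by (simp add: abs_mult power2_eq_square a2)
  qed
  also have "\<dots> \<le> (2 * s / D) * (2 / \<eta>)"
  proof (rule mult_left_mono)
    show "2 * \<bar>u - c\<bar> / D \<le> 2 / \<eta>" using key Dp \<eta> by (simp add: divide_simps)
  qed (use s Dp in simp)
  finally show ?thesis unfolding D_def by (simp add: mult.commute)
qed

lemma term_ratio:
  fixes s c u v \<eta> \<delta> :: real
  assumes s: "s > 0" and \<eta>: "\<eta> > 0" and uv: "\<bar>u - v\<bar> \<le> \<delta>" and D: "\<eta>^2 \<le> (v - c)^2 + s^2"
  shows "2 * s / ((v - c)^2 + s^2) \<le> (2 + 2*\<delta>^2/\<eta>^2) * (2 * s / ((u - c)^2 + s^2))"
proof -
  define Du where "Du = (u - c)^2 + s^2"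
  define Dv where "Dv = (v - c)^2 + s^2"
  have Dup: "Du > 0" unfolding Du_def using s by (simp add: add_nonneg_pos)
  have Dvp: "Dv > 0" unfolding Dv_def using s by (simp add: add_nonneg_pos)
  have "2 * (v - c)^2 + 2 * (u - v)^2 - (u - c)^2 = ((v - c) - (u - v))^2"
    by (simp add: power2_eq_square algebra_simps)
  then have "(u - c)^2 \<le> 2 * (v - c)^2 + 2 * (u - v)^2"
    using zero_le_power2[of "(v - c) - (u - v)"] by linarith
  moreover have "(u - v)^2 \<le> \<delta>^2"
    using power_mono[OF uv, of 2] by simp
  moreover have "\<delta>^2 \<le> (\<delta>^2/\<eta>^2) * Dv"
  proof -
    have "\<delta>^2 = (\<delta>^2/\<eta>^2) * \<eta>^2" using \<eta> by simp
    also have "\<dots> \<le> (\<delta>^2/\<eta>^2) * Dv" using D unfolding Dv_def by (intro mult_left_mono) auto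
    finally show ?thesis .
  qed
  ultimately have "Du \<le> 2 * Dv + 2 * ((\<delta>^2/\<eta>^2) * Dv)"
    using zero_le_power2[of s] Du_def Dv_def by linarith
  then have DD: "Du \<le> (2 + 2*\<delta>^2/\<eta>^2) * Dv" by (simp add: algebra_simps)
  define Rr where "Rr = 2 + 2*\<delta>^2/\<eta>^2"
  have Rp: "Rr > 0" unfolding Rr_def by (simp add: add_pos_nonneg)
  have "2 * s / Dv = (2 * s * Rr) / (Rr * Dv)" using Rp by simp
  also have "\<dots> \<le> (2 * s * Rr) / Du"
    using DD Dup Rp s unfolding Rr_def[symmetric] by (intro divide_left_mono) auto
  also have "\<dots> = Rr * (2 * s / Du)" by simp
  finally have "2 * s / Dv \<le> (2 + 2*\<delta>^2/\<eta>^2) * (2 * s / Du)" unfolding Rr_def .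
  then show ?thesis unfolding Du_def Dv_def .
qed

lemma term_lower:
  fixes s c x :: real
  assumes s: "s > 0"
  shows "(2/(1+x^2)) * (s/(1+(c^2+s^2))) \<le> 2 * s / ((x - c)^2 + s^2)"
proof -
  have D: "(x - c)^2 + s^2 \<le> (1+x^2) * (1+(c^2+s^2))"
  proof -
    have "0 \<le> (1 + x*c)^2 + x^2 * s^2" by simp
    then show ?thesis by (simp add: algebra_simps power2_eq_square)
  qed
  have Dp: "(x - c)^2 + s^2 > 0" using s by (simp add: add_nonneg_pos)
  have "(2/(1+x^2)) * (s/(1+(c^2+s^2))) = 2 * s / ((1+x^2) * (1+(c^2+s^2)))" by simp
  also have "\<dots> \<le> 2 * s / ((x - c)^2 + s^2)"
    using D Dp s by (intro divide_left_mono) auto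
  finally show ?thesis .
qed
lemma arctan_term_deriv:
  fixes s c u :: real
  assumes s: "s > 0"
  shows "((\<lambda>u. 2 * arctan ((u - c) / s)) has_real_derivative 2 * s / ((u - c)^2 + s^2)) (at u)"
proof -
  have "((\<lambda>u. 2 * arctan ((u - c) / s)) has_real_derivative 2 * (inverse (1 + ((u - c) / s)^2) * (1 / s))) (at u)"
    using s by (auto intro!: derivative_eq_intros)
  moreover have "2 * (inverse (1 + ((u - c) / s)^2) * (1 / s)) = 2 * s / ((u - c)^2 + s^2)"
    using s by (simp add: field_simps power2_eq_square)
  ultimately show ?thesis by simp
qed

lemma poisson_term_deriv:
  fixes s c u :: real
  assumes s: "s > 0"
  shows "((\<lambda>u. 2 * s / ((u - c)^2 + s^2)) has_real_derivative
      - (2 * s) * (2 * (u - c)) / ((u - c)^2 + s^2)^2) (at u)"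
proof -
  have "(u - c)^2 + s^2 > 0" using s by (simp add: add_nonneg_pos)
  then have Dp: "(u - c)^2 + s^2 \<noteq> 0" by linarith
  show ?thesis
    by (rule DERIV_cong[OF DERIV_divide[OF DERIV_const, of "\<lambda>u. (u - c)^2 + s^2" "2 * (u - c) * 1 + 0"]])
       (use Dp in \<open>auto intro!: derivative_eq_intros simp: power2_eq_square\<close>)
qed

theorem lemma7:
  fixes a :: "nat \<Rightarrow> complex" and C :: real
  assumes "\<And>k. Im (a k) > 0"
    and "no_real_limit_points a"
    and "filterlim (sigma a) at_top sequentially"
    and "\<And>n. n \<ge> 1 \<Longrightarrow> varsigma a n / sigma a n \<le> C"
  shows "\<forall>\<delta>>0. \<forall>x::real.
    (\<lambda>n. integral {0..\<delta>} (\<lambda>y. sin (y * mu a n y x) / y)) \<longlonglongrightarrow> pi / 2 \<and>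
    (\<lambda>n. integral {0..\<delta>} (\<lambda>y. sin (y * mu a n (- y) x) / y)) \<longlonglongrightarrow> pi / 2"
proof (intro allI impI)
  fix \<delta> x :: real
  assume \<delta>: "\<delta> > 0"
  have Im: "Im (a k) > 0" for k using assms(1) .
  define S where "S = {x-\<delta>..x+\<delta>}"
  obtain \<eta> where \<eta>: "\<eta> > 0" "\<And>k u. u \<in> S \<Longrightarrow> \<eta> \<le> cmod (complex_of_real u - a k)"
    using eta_exists[OF assms(1) assms(2), of S] unfolding S_def by auto
  define T where "T k u = 2 * Im (a k) / ((u - Re (a k))^2 + (Im (a k))^2)" for k u
  define Td where "Td k u = - (2 * Im (a k)) * (2 * (u - Re (a k))) / ((u - Re (a k))^2 + (Im (a k))^2)^2" for k u
  define P where "P n = poisson_sum a n" for n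
  define P' where "P' n u = (\<Sum>k<n. Td k u)" for n u
  define A where "A n u = (\<Sum>k<n. 2 * arctan ((u - Re (a k)) / Im (a k)))" for n u
  define K where "K = 2/\<eta>"
  define R where "R = 2 + 2*\<delta>^2/\<eta>^2"
  have K0: "K \<ge> 0" unfolding K_def using \<eta> by simp
  have R1: "R \<ge> 1" unfolding R_def by simp
  have PT: "P n u = (\<Sum>k<n. T k u)" for n u unfolding P_def poisson_sum_def T_def ..
  have Tnn: "T k u \<ge> 0" for k u unfolding T_def using Im[of k] by simp
  have Deta: "\<eta>^2 \<le> (u - Re (a k))^2 + (Im (a k))^2" if "u \<in> S" for k u
  proof -
    have "\<eta>^2 \<le> (cmod (complex_of_real u - a k))^2" using \<eta>(1) \<eta>(2)[OF that, of k] by (intro power_mono) auto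
    also have "\<dots> = (u - Re (a k))^2 + (Im (a k))^2" by (simp add: cmod_power2)
    finally show ?thesis .
  qed
  have dA: "(A n has_real_derivative P n u) (at u)" for n u
  proof -
    have "((\<lambda>u. \<Sum>k<n. 2 * arctan ((u - Re (a k)) / Im (a k))) has_real_derivative (\<Sum>k<n. T k u)) (at u)"
      by (rule DERIV_sum) (unfold T_def, rule arctan_term_deriv[OF Im])
    then show ?thesis unfolding A_def PT by (simp add: fun_eq_iff)
  qed
  have dP: "(P n has_real_derivative P' n u) (at u)" for n u
  proof -
    have "((\<lambda>u. \<Sum>k<n. T k u) has_real_derivative (\<Sum>k<n. Td k u)) (at u)"
      by (rule DERIV_sum) (unfold T_def Td_def, rule poisson_term_deriv[OF Im])
    moreover have "P n = (\<lambda>u. \<Sum>k<n. T k u)" using PT by (simp add: fun_eq_iff)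
    ultimately show ?thesis unfolding P'_def by simp
  qed
  have P'b: "\<bar>P' n u\<bar> \<le> K * P n u" if u: "u \<in> S" for n u
  proof -
    have "\<bar>P' n u\<bar> \<le> (\<Sum>k<n. \<bar>Td k u\<bar>)" unfolding P'_def by (rule sum_abs)
    also have "\<dots> \<le> (\<Sum>k<n. K * T k u)"
      by (rule sum_mono) (unfold Td_def T_def K_def, rule term_deriv_bound[OF Im \<eta>(1) Deta[OF u]])
    also have "\<dots> = K * P n u" unfolding PT by (simp add: sum_distrib_left)
    finally show ?thesis .
  qed
  have Pratio: "P n v \<le> R * P n u" if v: "v \<in> S" and uv: "\<bar>u - v\<bar> \<le> \<delta>" for n u v
  proof -
    have "P n v \<le> (\<Sum>k<n. R * T k u)" unfolding PT
      by (rule sum_mono) (unfold T_def R_def, rule term_ratio[OF Im \<eta>(1) uv Deta[OF v]])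
    also have "\<dots> = R * P n u" unfolding PT by (simp add: sum_distrib_left)
    finally show ?thesis .
  qed
  have Plow: "(2/(1+x^2)) * sigma a n \<le> P n x" for n
  proof -
    have "(2/(1+x^2)) * sigma a n = (\<Sum>k<n. (2/(1+x^2)) * (Im (a k) / (1 + ((Re (a k))^2 + (Im (a k))^2))))"
      unfolding sigma_def sum_distrib_left using Im by (simp add: cmod_power2 less_imp_le)
    also have "\<dots> \<le> (\<Sum>k<n. T k x)"
      by (rule sum_mono) (unfold T_def, rule term_lower[OF Im])
    finally show ?thesis unfolding PT .
  qed
  have Pdiv: "filterlim (\<lambda>n. P n x) at_top sequentially"
  proof (rule filterlim_at_top_mono[OF _ always_eventually])
    show "LIM n sequentially. (2/(1+x^2)) * sigma a n :> at_top"
      by (rule filterlim_tendsto_pos_mult_at_top[OF tendsto_const _ assms(3)]) (simp add: add_pos_nonneg)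
    show "\<forall>n. (2/(1+x^2)) * sigma a n \<le> P n x" using Plow by blast
  qed
  have inS1: "x + y \<in> S" "x - y \<in> S" "x \<in> S" if "y \<in> {0..\<delta>}" for y using that \<delta> unfolding S_def by auto
  have FTC: "integral {u..v} (poisson_sum a n) = A n v - A n u" if "u \<le> v" for n u v
  proof -
    have "(P n has_integral A n v - A n u) {u..v}"
      by (rule fundamental_theorem_of_calculus[OF that])
         (simp add: has_real_derivative_iff_has_vector_derivative[symmetric] has_field_derivative_at_within dA)
    then show ?thesis unfolding P_def by (rule integral_unique)
  qed
  show "(\<lambda>n. integral {0..\<delta>} (\<lambda>y. sin (y * mu a n y x) / y)) \<longlonglongrightarrow> pi / 2 \<and>
    (\<lambda>n. integral {0..\<delta>} (\<lambda>y. sin (y * mu a n (- y) x) / y)) \<longlonglongrightarrow> pi / 2"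
  proof
    have lim: "(\<lambda>n. integral {0..\<delta>} (\<lambda>y. sin (A n (x + y) - A n x) / y)) \<longlonglongrightarrow> pi/2"
    proof (rule limit_part[OF \<delta> K0 R1, where g = "\<lambda>n y. P n (x + y)" and g' = "\<lambda>n y. P' n (x + y)"])
      fix n y
      have "((\<lambda>y. A n (x + y)) has_real_derivative P n (x + y) * 1) (at y)"
        by (rule DERIV_chain2[OF dA]) (auto intro!: derivative_eq_intros)
      then show "((\<lambda>y. A n (x + y) - A n x) has_real_derivative P n (x + y)) (at y)"
        by (auto intro!: derivative_eq_intros)
      have "((\<lambda>y. P n (x + y)) has_real_derivative P' n (x + y) * 1) (at y)"
        by (rule DERIV_chain2[OF dP]) (auto intro!: derivative_eq_intros)
      then show "((\<lambda>y. P n (x + y)) has_real_derivative P' n (x + y)) (at y)" by simp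
    next
      fix n y assume y: "y \<in> {0..\<delta>}"
      show "\<bar>P' n (x + y)\<bar> \<le> K * P n (x + y)" by (rule P'b[OF inS1(1)[OF y]])
      show "P n (x + y) \<le> R * P n (x + 0)" using Pratio[OF inS1(1)[OF y], of x n] y by simp
      show "P n (x + 0) \<le> R * P n (x + y)" using Pratio[OF inS1(3)[OF y], of "x + y" n] y by simp
    next
      show "filterlim (\<lambda>n. P n (x + 0)) at_top sequentially" using Pdiv by simp
    qed simp
    have eq: "integral {0..\<delta>} (\<lambda>y. sin (y * mu a n y x) / y) =
              integral {0..\<delta>} (\<lambda>y. sin (A n (x + y) - A n x) / y)" for n
    proof (rule integral_cong)
      fix y assume y: "y \<in> {0..\<delta>}"
      show "sin (y * mu a n y x) / y = sin (A n (x + y) - A n x) / y"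
      proof (cases "y = 0")
        case False
        then have "y * mu a n y x = A n (x + y) - A n x"
          using y FTC[of x "x + y" n] unfolding mu_def by simp
        then show ?thesis by simp
      qed simp
    qed
    show "(\<lambda>n. integral {0..\<delta>} (\<lambda>y. sin (y * mu a n y x) / y)) \<longlonglongrightarrow> pi / 2"
      using lim unfolding eq .
  next
    have lim: "(\<lambda>n. integral {0..\<delta>} (\<lambda>y. sin (A n x - A n (x - y)) / y)) \<longlonglongrightarrow> pi/2"
    proof (rule limit_part[OF \<delta> K0 R1, where g = "\<lambda>n y. P n (x - y)" and g' = "\<lambda>n y. - P' n (x - y)"])
      fix n y
      have "((\<lambda>y. A n (x - y)) has_real_derivative P n (x - y) * (- 1)) (at y)"
        by (rule DERIV_chain2[OF dA]) (auto intro!: derivative_eq_intros)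
      then show "((\<lambda>y. A n x - A n (x - y)) has_real_derivative P n (x - y)) (at y)"
        by (auto intro!: derivative_eq_intros)
      have "((\<lambda>y. P n (x - y)) has_real_derivative P' n (x - y) * (- 1)) (at y)"
        by (rule DERIV_chain2[OF dP]) (auto intro!: derivative_eq_intros)
      then show "((\<lambda>y. P n (x - y)) has_real_derivative - P' n (x - y)) (at y)" by simp
    next
      fix n y assume y: "y \<in> {0..\<delta>}"
      show "\<bar>- P' n (x - y)\<bar> \<le> K * P n (x - y)" using P'b[OF inS1(2)[OF y]] by simp
      show "P n (x - y) \<le> R * P n (x - 0)" using Pratio[OF inS1(2)[OF y], of x n] y by simp
      show "P n (x - 0) \<le> R * P n (x - y)" using Pratio[OF inS1(3)[OF y], of "x - y" n] y by simp
    next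
      show "filterlim (\<lambda>n. P n (x - 0)) at_top sequentially" using Pdiv by simp
    qed simp
    have eq: "integral {0..\<delta>} (\<lambda>y. sin (y * mu a n (- y) x) / y) =
              integral {0..\<delta>} (\<lambda>y. sin (A n x - A n (x - y)) / y)" for n
    proof (rule integral_cong)
      fix y assume y: "y \<in> {0..\<delta>}"
      show "sin (y * mu a n (- y) x) / y = sin (A n x - A n (x - y)) / y"
      proof (cases "y = 0")
        case False
        then have "y * mu a n (- y) x = A n x - A n (x - y)"
          using y FTC[of "x - y" x n] unfolding mu_def by simp
        then show ?thesis by simp
      qed simp
    qed
    show "(\<lambda>n. integral {0..\<delta>} (\<lambda>y. sin (y * mu a n (- y) x) / y)) \<longlonglongrightarrow> pi / 2"
      using lim unfolding eq .
  qed
qed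

end
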